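(* Let $\gamma\in\mathbb{R}$, $\lambda>0$, $\Delta>0$, let $\nu$ be a finite measure on $\mathbb{R}$ with $\nu(\mathbb{R})=\lambda$, $F:=\nu/\lambda$, and let $P$ and $\mathcal{F}^{-1}[\varphi^{-1}(-\cdot)]$ be as in the context. Let $f_1,f_2$ be bounded functions. Then $$\int_{\mathbb{R}}\big(f_1*\mathcal{F}^{-1}[\varphi^{-1}(-\cdot)](x)\big)\big(f_2*\mathcal{F}^{-1}[\varphi^{-1}(-\cdot)](x)\big)P(dx)$$ $$=f_1(0)f_2(0)+\Delta\Big(\int_{\mathbb{R}}f_1f_2\,d\nu-f_1(0)\,(f_2*\bar\nu)(0)-f_2(0)\,(f_1*\bar\nu)(0)+\lambda f_1(0)f_2(0)\Big)+O((\lambda\Delta)^2).$$ In particular, if $f_1(0)=f_2(0)=0$, the left-hand side equals $\lambda\Delta\int_{\mathbb{R}}f_1(x)f_2(x)F(dx)+O((\lambda\Delta)^2)$.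
   Context: $\bar\nu(A):=\nu(-A)$ for Borel $A$, $\nu^{*k}$ and $\bar\nu^{*k}$ are $k$-fold convolutions with $\nu^{*0}=\bar\nu^{*0}=\delta_0$. $P:=e^{-\lambda\Delta}\delta_{\gamma\Delta}*\sum_{k\ge0}\nu^{*k}\Delta^k/k!$ (the law of $X_\Delta$ for the compound Poisson process with drift $\gamma$, intensity $\lambda$ and jump law $F$), $\varphi=\mathcal{F}P$ with $\mathcal{F}\mu(u)=\int e^{iux}\mu(dx)$, i.e. $\varphi(u)=\exp(\Delta(i\gamma u+\mathcal{F}\nu(u)-\lambda))$, and $\mathcal{F}^{-1}[\varphi^{-1}(-\cdot)]:=e^{\lambda\Delta}\delta_{\gamma\Delta}*\sum_{k\ge0}\bar\nu^{*k}(-\Delta)^k/k!$, a finite signed measure whose Fourier transform is $u\mapsto1/\varphi(-u)$. For a bounded function $f$ and finite (signed) measure $\mu$, $f*\mu(x):=\int f(x-y)\mu(dy)$. *)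

theory Defs
  imports "HOL-Probability.Probability"
begin

definition fun_conv :: "(real \<Rightarrow> real) \<Rightarrow> real measure \<Rightarrow> real \<Rightarrow> real" where
  "fun_conv f \<mu> x = (\<integral>y. f (x - y) \<partial>\<mu>)"

primrec conv_pow :: "real measure \<Rightarrow> nat \<Rightarrow> real measure" where
  "conv_pow \<nu> 0 = return borel 0"
| "conv_pow \<nu> (Suc k) = convolution \<nu> (conv_pow \<nu> k)"

definition nu_bar :: "real measure \<Rightarrow> real measure" where
  "nu_bar \<nu> = distr \<nu> borel uminus"

definition P_meas :: "real \<Rightarrow> real \<Rightarrow> real \<Rightarrow> real measure \<Rightarrow> real measure" where
  "P_meas \<gamma> lam \<Delta> \<nu> = measure_of UNIV (sets borel)
     (\<lambda>A. \<Sum>k. ennreal (exp (- lam * \<Delta>) * \<Delta> ^ k / fact k)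
                 * emeasure (convolution (return borel (\<gamma> * \<Delta>)) (conv_pow \<nu> k)) A)"

text \<open>f * F^{-1}[phi^{-1}(-.)], where F^{-1}[phi^{-1}(-.)] is the finite signed measure
  e^{lam Delta} delta_{gamma Delta} * sum_k nubar^{*k} (-Delta)^k / k!; the convolution of f
  with this series of measures is the corresponding series of convolutions.\<close>
definition conv_inv :: "(real \<Rightarrow> real) \<Rightarrow> real \<Rightarrow> real \<Rightarrow> real \<Rightarrow> real measure \<Rightarrow> real \<Rightarrow> real" where
  "conv_inv f \<gamma> lam \<Delta> \<nu> x = (\<Sum>k. exp (lam * \<Delta>) * (- \<Delta>) ^ k / fact k
       * fun_conv f (convolution (return borel (\<gamma> * \<Delta>)) (conv_pow (nu_bar \<nu>) k)) x)"

end

theory Submission imports Defs begin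

lemma abs_integral_le_const:
  fixes g :: "real \<Rightarrow> real"
  assumes "finite_measure M" "g \<in> borel_measurable M" "\<And>x. \<bar>g x\<bar> \<le> B"
  shows "\<bar>\<integral>x. g x \<partial>M\<bar> \<le> B * measure M (space M)"
proof -
  interpret finite_measure M by fact
  have i: "integrable M g" using assms by (intro integrable_const_bound[of _ B]) auto
  have "\<bar>\<integral>x. g x \<partial>M\<bar> \<le> (\<integral>x. B \<partial>M)"
    by (rule integral_abs_bound_integral[OF i]) (use assms in auto)
  then show ?thesis by (simp add: mult.commute)
qed

lemma integral_convolution:
  fixes g :: "real \<Rightarrow> real"
  assumes M: "finite_measure M" and N: "finite_measure N"
    and sM[measurable_cong]: "sets M = sets borel" and sN[measurable_cong]: "sets N = sets borel"
    and g[measurable]: "g \<in> borel_measurable borel" and gb: "\<And>x. \<bar>g x\<bar> \<le> B"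
  shows "(\<integral>x. g x \<partial>(M \<star> N)) = (\<integral>x. (\<integral>y. g (x + y) \<partial>N) \<partial>M)"
proof -
  interpret M: finite_measure M by fact
  interpret N: finite_measure N by fact
  interpret pair_sigma_finite M N ..
  interpret P: finite_measure "M \<Otimes>\<^sub>M N" by (rule finite_measure_pair_measure) fact+
  have int: "integrable (M \<Otimes>\<^sub>M N) (\<lambda>(x, y). g (x + y))"
    by (rule P.integrable_const_bound[of _ B]) (use gb in auto)
  show ?thesis
    unfolding convolution_def
    apply (subst integral_distr)
      apply simp
     apply simp
    using integral_fst'[OF int] by (simp add: case_prod_beta')
qed

definition sumM :: "(nat \<Rightarrow> real) \<Rightarrow> (nat \<Rightarrow> real measure) \<Rightarrow> real measure" where
  "sumM w Q = measure_of UNIV (sets borel) (\<lambda>A. \<Sum>k. ennreal (w k) * emeasure (Q k) A)"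

lemma sets_sumM[simp, measurable_cong]: "sets (sumM w Q) = sets borel"
  by (simp add: sumM_def) (metis sets.sigma_sets_eq space_borel)

lemma space_sumM[simp]: "space (sumM w Q) = UNIV"
  by (simp add: sumM_def)

lemma emeasure_sumM:
  assumes sQ: "\<And>k. sets (Q k) = sets borel" and A: "A \<in> sets borel"
  shows "emeasure (sumM w Q) A = (\<Sum>k. ennreal (w k) * emeasure (Q k) A)"
  unfolding sumM_def
proof (rule emeasure_measure_of_sigma)
  show "sigma_algebra UNIV (sets borel)"
    by (metis sets.sigma_algebra_axioms space_borel)
  show "positive (sets borel) (\<lambda>A. \<Sum>k. ennreal (w k) * emeasure (Q k) A)"
    by (simp add: positive_def)
  show "countably_additive (sets borel) (\<lambda>A. \<Sum>k. ennreal (w k) * emeasure (Q k) A)"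
  proof (rule countably_additiveI)
    fix A :: "nat \<Rightarrow> real set" assume *: "range A \<subseteq> sets borel" "disjoint_family A"
    have "(\<Sum>i. \<Sum>k. ennreal (w k) * emeasure (Q k) (A i))
        = (\<Sum>i. \<integral>\<^sup>+k. ennreal (w k) * emeasure (Q k) (A i) \<partial>count_space UNIV)"
      by (simp add: nn_integral_count_space_nat)
    also have "\<dots> = (\<integral>\<^sup>+k. (\<Sum>i. ennreal (w k) * emeasure (Q k) (A i)) \<partial>count_space UNIV)"
      by (rule nn_integral_suminf[symmetric]) simp
    also have "\<dots> = (\<integral>\<^sup>+k. ennreal (w k) * emeasure (Q k) (\<Union>i. A i) \<partial>count_space UNIV)"
      using * sQ by (simp add: suminf_emeasure)
    also have "\<dots> = (\<Sum>k. ennreal (w k) * emeasure (Q k) (\<Union>i. A i))"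
      by (simp add: nn_integral_count_space_nat)
    finally show "(\<Sum>i. \<Sum>k. ennreal (w k) * emeasure (Q k) (A i)) = (\<Sum>k. ennreal (w k) * emeasure (Q k) (\<Union>i. A i))" .
  qed
qed (use A in auto)

lemma nn_integral_sumM:
  assumes sQ: "\<And>k. sets (Q k) = sets borel" and g: "g \<in> borel_measurable borel"
  shows "(\<integral>\<^sup>+x. g x \<partial>sumM w Q) = (\<Sum>k. ennreal (w k) * (\<integral>\<^sup>+x. g x \<partial>Q k))"
proof -
  have spQ: "\<And>k. space (Q k) = UNIV" using sQ by (metis sets_eq_imp_space_eq space_borel)
  have g': "g \<in> borel_measurable (sumM w Q)" using g by (simp cong: measurable_cong_sets)
  from g' show ?thesis
  proof induction
    case (cong f g)
    then show ?case by (simp add: spQ cong: nn_integral_cong_simp)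
  next
    case (set A)
    then show ?case using sQ by (simp add: emeasure_sumM)
  next
    case (mult u c)
    have mQ: "\<And>k. u \<in> borel_measurable (Q k)" using mult(2) sQ by (simp cong: measurable_cong_sets)
    then show ?case using mult
      by (simp add: nn_integral_cmult mult.left_commute)
  next
    case (add u v)
    have mQ: "\<And>k. u \<in> borel_measurable (Q k)" "\<And>k. v \<in> borel_measurable (Q k)"
      using add sQ by (simp_all cong: measurable_cong_sets)
    then show ?case using add
      by (simp add: nn_integral_add distrib_left suminf_add[OF summableI summableI])
  next
    case (seq U)
    have mQ: "\<And>k i. U i \<in> borel_measurable (Q k)"
      using seq sQ by (simp cong: measurable_cong_sets)
    have "(\<integral>\<^sup>+x. (SUP i. U i) x \<partial>sumM w Q) = (SUP i. \<integral>\<^sup>+x. U i x \<partial>sumM w Q)"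
      unfolding SUP_apply by (rule nn_integral_monotone_convergence_SUP) (use seq in auto)
    also have "\<dots> = (SUP i. \<Sum>k. ennreal (w k) * (\<integral>\<^sup>+x. U i x \<partial>Q k))"
      using seq by simp
    also have "\<dots> = (\<Sum>k. SUP i. ennreal (w k) * (\<integral>\<^sup>+x. U i x \<partial>Q k))"
    proof (rule ennreal_suminf_SUP_eq[symmetric])
      fix k show "incseq (\<lambda>i. ennreal (w k) * (\<integral>\<^sup>+x. U i x \<partial>Q k))"
      proof (rule incseq_SucI)
        fix i
        have "U i \<le> U (Suc i)" using \<open>incseq U\<close> by (simp add: incseq_Suc_iff)
        then have "(\<integral>\<^sup>+x. U i x \<partial>Q k) \<le> (\<integral>\<^sup>+x. U (Suc i) x \<partial>Q k)"
          by (intro nn_integral_mono) (simp add: le_fun_def)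
        then show "ennreal (w k) * (\<integral>\<^sup>+x. U i x \<partial>Q k) \<le> ennreal (w k) * (\<integral>\<^sup>+x. U (Suc i) x \<partial>Q k)"
          by (rule mult_left_mono) simp
      qed
    qed
    also have "\<dots> = (\<Sum>k. ennreal (w k) * (\<integral>\<^sup>+x. (SUP i. U i) x \<partial>Q k))"
    proof (rule suminf_cong)
      fix k
      have "(\<integral>\<^sup>+x. (SUP i. U i) x \<partial>Q k) = (SUP i. \<integral>\<^sup>+x. U i x \<partial>Q k)"
        unfolding SUP_apply by (rule nn_integral_monotone_convergence_SUP) (use seq mQ in auto)
      then show "(SUP i. ennreal (w k) * (\<integral>\<^sup>+x. U i x \<partial>Q k)) = ennreal (w k) * (\<integral>\<^sup>+x. (SUP i. U i) x \<partial>Q k)"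
        by (simp add: SUP_mult_left_ennreal)
    qed
    finally show ?case .
  qed
qed

lemma integral_sumM_nonneg:
  assumes fin: "\<And>k. finite_measure (Q k)" and sQ: "\<And>k. sets (Q k) = sets borel"
    and w: "\<And>k. 0 \<le> w k" and sm: "summable (\<lambda>k. w k * measure (Q k) UNIV)"
    and g[measurable]: "g \<in> borel_measurable borel" and g0: "\<And>x. 0 \<le> g x" and gB: "\<And>x. g x \<le> B"
  shows "summable (\<lambda>k. w k * (\<integral>x. g x \<partial>Q k))"
    and "(\<integral>\<^sup>+x. g x \<partial>sumM w Q) = ennreal (\<Sum>k. w k * (\<integral>x. g x \<partial>Q k))"
proof -
  have spQ: "\<And>k. space (Q k) = UNIV" using sQ by (metis sets_eq_imp_space_eq space_borel)
  have gQ: "\<And>k. g \<in> borel_measurable (Q k)" using sQ by (simp cong: measurable_cong_sets)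
  have intQ: "\<And>k. integrable (Q k) g"
    using gQ g0 gB by (intro finite_measure.integrable_const_bound[OF fin, of _ B]) auto
  have Ib: "\<And>k. \<bar>\<integral>x. g x \<partial>Q k\<bar> \<le> B * measure (Q k) UNIV"
    using abs_integral_le_const[OF fin gQ] g0 gB spQ by (metis abs_of_nonneg)
  have I0: "\<And>k. 0 \<le> (\<integral>x. g x \<partial>Q k)" using g0 by (simp add: integral_nonneg_AE)
  show s: "summable (\<lambda>k. w k * (\<integral>x. g x \<partial>Q k))"
  proof (rule summable_comparison_test')
    show "summable (\<lambda>k. B * (w k * measure (Q k) UNIV))" using sm by (rule summable_mult)
    fix k :: nat
    have "\<bar>w k * (\<integral>x. g x \<partial>Q k)\<bar> = w k * \<bar>\<integral>x. g x \<partial>Q k\<bar>" using w by (simp add: abs_mult)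
    also have "\<dots> \<le> w k * (B * measure (Q k) UNIV)" using Ib w by (rule mult_left_mono)
    finally show "norm (w k * (\<integral>x. g x \<partial>Q k)) \<le> B * (w k * measure (Q k) UNIV)" by (simp add: mult.left_commute)
  qed
  have "(\<integral>\<^sup>+x. g x \<partial>sumM w Q) = (\<Sum>k. ennreal (w k) * (\<integral>\<^sup>+x. g x \<partial>Q k))"
    using nn_integral_sumM[OF sQ] by simp
  also have "\<dots> = (\<Sum>k. ennreal (w k * (\<integral>x. g x \<partial>Q k)))"
    using intQ g0 w by (simp add: nn_integral_eq_integral ennreal_mult)
  also have "\<dots> = ennreal (\<Sum>k. w k * (\<integral>x. g x \<partial>Q k))"
    using s w I0 by (intro suminf_ennreal_eq) (auto simp: summable_sums)
  finally show "(\<integral>\<^sup>+x. g x \<partial>sumM w Q) = ennreal (\<Sum>k. w k * (\<integral>x. g x \<partial>Q k))" .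
qed

lemma integral_sumM:
  assumes fin: "\<And>k. finite_measure (Q k)" and sQ: "\<And>k. sets (Q k) = sets borel"
    and w: "\<And>k. 0 \<le> w k" and sm: "summable (\<lambda>k. w k * measure (Q k) UNIV)"
    and h[measurable]: "h \<in> borel_measurable borel" and hB: "\<And>x. \<bar>h x\<bar> \<le> B"
  shows "finite_measure (sumM w Q)"
    and "measure (sumM w Q) UNIV = (\<Sum>k. w k * measure (Q k) UNIV)"
    and "summable (\<lambda>k. w k * (\<integral>x. h x \<partial>Q k))"
    and "(\<integral>x. h x \<partial>sumM w Q) = (\<Sum>k. w k * (\<integral>x. h x \<partial>Q k))"
proof -
  have spQ: "\<And>k. space (Q k) = UNIV" using sQ by (metis sets_eq_imp_space_eq space_borel)
  define S where "S = (\<Sum>k. w k * measure (Q k) UNIV)"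
  have S0: "0 \<le> S" unfolding S_def using w by (intro suminf_nonneg sm) (simp add: measure_nonneg)
  have one: "\<And>k. (\<integral>x. (1::real) \<partial>Q k) = measure (Q k) UNIV" by (simp add: spQ)
  have "(\<integral>\<^sup>+x. ennreal 1 \<partial>sumM w Q) = ennreal S"
    using integral_sumM_nonneg(2)[OF fin sQ w sm, of "\<lambda>_. 1" 1] by (simp add: spQ S_def)
  then have em: "emeasure (sumM w Q) UNIV = ennreal S" by simp
  show fP: "finite_measure (sumM w Q)" by (rule finite_measureI) (simp add: em)
  have mP: "measure (sumM w Q) UNIV = S" using em S0 by (simp add: measure_def)
  then show "measure (sumM w Q) UNIV = (\<Sum>k. w k * measure (Q k) UNIV)" by (simp add: S_def)
  have B0: "0 \<le> B" using hB[of 0] by linarith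
  have hQ: "\<And>k. h \<in> borel_measurable (Q k)" using sQ by (simp cong: measurable_cong_sets)
  have Ib: "\<And>k. \<bar>\<integral>x. h x \<partial>Q k\<bar> \<le> B * measure (Q k) UNIV"
    using abs_integral_le_const[OF fin hQ hB] spQ by simp
  show sh: "summable (\<lambda>k. w k * (\<integral>x. h x \<partial>Q k))"
  proof (rule summable_comparison_test')
    show "summable (\<lambda>k. B * (w k * measure (Q k) UNIV))" using sm by (rule summable_mult)
    fix k :: nat
    have "\<bar>w k * (\<integral>x. h x \<partial>Q k)\<bar> = w k * \<bar>\<integral>x. h x \<partial>Q k\<bar>" using w by (simp add: abs_mult)
    also have "\<dots> \<le> w k * (B * measure (Q k) UNIV)" using Ib w by (rule mult_left_mono)
    finally show "norm (w k * (\<integral>x. h x \<partial>Q k)) \<le> B * (w k * measure (Q k) UNIV)" by (simp add: mult.left_commute)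
  qed
  have g0: "\<And>x. 0 \<le> h x + B" using hB by (smt (verit))
  have gB: "\<And>x. h x + B \<le> 2 * B" using hB by (smt (verit))
  have intQ: "\<And>k. integrable (Q k) h"
    using hQ hB by (intro finite_measure.integrable_const_bound[OF fin, of _ B]) auto
  have intP: "integrable (sumM w Q) h"
    using hB by (intro finite_measure.integrable_const_bound[OF fP, of _ B]) auto
  have "(\<integral>x. h x + B \<partial>sumM w Q) = enn2real (\<integral>\<^sup>+x. ennreal (h x + B) \<partial>sumM w Q)"
    using g0 by (intro integral_eq_nn_integral) auto
  also have "\<dots> = (\<Sum>k. w k * (\<integral>x. h x + B \<partial>Q k))"
    using integral_sumM_nonneg(1,2)[OF fin sQ w sm, of "\<lambda>x. h x + B" "2 * B"] g0 gB w
    by (simp add: suminf_nonneg integral_nonneg_AE)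
  also have "\<dots> = (\<Sum>k. w k * (\<integral>x. h x \<partial>Q k) + B * (w k * measure (Q k) UNIV))"
  proof (rule suminf_cong)
    fix k
    interpret finite_measure "Q k" by (rule fin)
    have "(\<integral>x. h x + B \<partial>Q k) = (\<integral>x. h x \<partial>Q k) + B * measure (Q k) UNIV"
      using intQ[of k] by (simp add: spQ)
    then show "w k * (\<integral>x. h x + B \<partial>Q k) = w k * (\<integral>x. h x \<partial>Q k) + B * (w k * measure (Q k) UNIV)"
      by (simp add: algebra_simps)
  qed
  also have "\<dots> = (\<Sum>k. w k * (\<integral>x. h x \<partial>Q k)) + B * S"
    using sh sm unfolding S_def by (subst suminf_add[symmetric]) (auto intro: summable_mult simp: suminf_mult)
  finally have "(\<integral>x. h x + B \<partial>sumM w Q) = (\<Sum>k. w k * (\<integral>x. h x \<partial>Q k)) + B * S" .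
  moreover have "(\<integral>x. h x + B \<partial>sumM w Q) = (\<integral>x. h x \<partial>sumM w Q) + B * S"
  proof -
    interpret finite_measure "sumM w Q" by (rule fP)
    show ?thesis using intP mP by (simp add: mult.commute)
  qed
  ultimately show "(\<integral>x. h x \<partial>sumM w Q) = (\<Sum>k. w k * (\<integral>x. h x \<partial>Q k))" by simp
qed

lemma space_borel_sets:
  assumes "sets M = sets borel" shows "space M = UNIV"
  using assms by (metis sets_eq_imp_space_eq space_borel)

lemma fin_return: "finite_measure (return borel (c::real))"
  by (rule finite_measureI) simp

lemma conv_finite_mass:
  fixes M N :: "real measure"
  assumes M: "finite_measure M" and N: "finite_measure N"
    and sM: "sets M = sets borel" and sN: "sets N = sets borel"
  shows "finite_measure (M \<star> N)" "measure (M \<star> N) UNIV = measure M UNIV * measure N UNIV"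
proof -
  show fC: "finite_measure (M \<star> N)" using convolution_finite[OF M N sN sM] .
  have "(\<integral>x. (1::real) \<partial>(M \<star> N)) = (\<integral>x. (\<integral>y. 1 \<partial>N) \<partial>M)"
    by (rule integral_convolution[OF M N sM sN, of _ 1]) auto
  then show "measure (M \<star> N) UNIV = measure M UNIV * measure N UNIV"
    using space_borel_sets[OF sM] space_borel_sets[OF sN] by simp
qed

lemma integral_conv_return:
  fixes g :: "real \<Rightarrow> real"
  assumes N: "finite_measure N" and sN[measurable_cong]: "sets N = sets borel"
    and g[measurable]: "g \<in> borel_measurable borel" and gb: "\<And>x. \<bar>g x\<bar> \<le> B"
  shows "(\<integral>x. g x \<partial>(return borel c \<star> N)) = (\<integral>y. g (c + y) \<partial>N)"
proof -
  interpret N: finite_measure N by fact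
  have fR: "finite_measure (return borel c)" by (rule fin_return)
  have m: "(\<lambda>x. \<integral>y. g (x + y) \<partial>N) \<in> borel_measurable borel"
    by (rule N.borel_measurable_lebesgue_integral) simp
  show ?thesis
    by (subst integral_convolution[OF fR N _ sN g gb]) (simp_all add: integral_return[OF _ m])
qed

lemma conv_return_props:
  fixes N :: "real measure"
  assumes N: "finite_measure N" and sN: "sets N = sets borel"
  shows "finite_measure (return borel c \<star> N)" "sets (return borel c \<star> N) = sets borel"
    "measure (return borel c \<star> N) UNIV = measure N UNIV"
proof -
  have fR: "finite_measure (return borel c)" by (rule fin_return)
  show "finite_measure (return borel c \<star> N)" "sets (return borel c \<star> N) = sets borel"
    using conv_finite_mass[OF fR N _ sN] by auto
  show "measure (return borel c \<star> N) UNIV = measure N UNIV"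
    using conv_finite_mass[OF fR N _ sN] by (simp add: measure_def)
qed

lemma conv_pow_props:
  fixes N :: "real measure"
  assumes N: "finite_measure N" and sN: "sets N = sets borel"
  shows "finite_measure (conv_pow N k) \<and> sets (conv_pow N k) = sets borel
     \<and> measure (conv_pow N k) UNIV = measure N UNIV ^ k"
proof (induction k)
  case 0
  then show ?case by (simp add: fin_return measure_def)
next
  case (Suc k)
  then show ?case using conv_finite_mass[OF N _ sN, of "conv_pow N k"] by simp
qed

lemma nu_bar_props:
  fixes N :: "real measure"
  assumes N: "finite_measure N" and sN[measurable_cong]: "sets N = sets borel"
  shows "finite_measure (nu_bar N)" "sets (nu_bar N) = sets borel"
    "measure (nu_bar N) UNIV = measure N UNIV"
proof -
  interpret finite_measure N by fact
  show "finite_measure (nu_bar N)" unfolding nu_bar_def by (intro finite_measure_distr) simp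
  show "sets (nu_bar N) = sets borel" by (simp add: nu_bar_def)
  show "measure (nu_bar N) UNIV = measure N UNIV"
    unfolding nu_bar_def by (subst measure_distr) (simp_all add: space_borel_sets[OF sN])
qed

lemma integral_nu_bar:
  fixes g :: "real \<Rightarrow> real"
  assumes sN[measurable_cong]: "sets N = sets borel" and g[measurable]: "g \<in> borel_measurable borel"
  shows "(\<integral>x. g x \<partial>nu_bar N) = (\<integral>x. g (- x) \<partial>N)"
  unfolding nu_bar_def by (subst integral_distr) simp_all

lemma series_split:
  fixes u :: "nat \<Rightarrow> real"
  assumes ub: "\<And>k. \<bar>u k\<bar> \<le> K * (t ^ k / fact k)" and t0: "0 \<le> t"
  shows "summable u" "\<bar>suminf u\<bar> \<le> K * exp t" "\<bar>suminf u - u 0 - u 1\<bar> \<le> K * t\<^sup>2 * exp t"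
proof -
  have es: "(\<lambda>k. t ^ k / fact k) sums exp t"
    using exp_converges[of t] by (simp add: divide_inverse mult.commute)
  have se: "summable (\<lambda>k. t ^ k / fact k)" using es by (rule sums_summable)
  have K0: "0 \<le> K" using ub[of 0] by (smt (verit) div_by_1 fact_0 power_0 mult_cancel_left1)
  have sKe: "summable (\<lambda>k. K * (t ^ k / fact k))" using se by (rule summable_mult)
  have sa: "summable (\<lambda>k. \<bar>u k\<bar>)"
    by (rule summable_comparison_test'[OF sKe]) (use ub in simp)
  show su: "summable u" using sa by (rule summable_rabs_cancel)
  have "\<bar>suminf u\<bar> \<le> (\<Sum>k. \<bar>u k\<bar>)" using sa by (rule summable_rabs)
  also have "\<dots> \<le> (\<Sum>k. K * (t ^ k / fact k))" by (rule suminf_le[OF ub sa sKe])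
  also have "\<dots> = K * exp t" using sums_unique[OF sums_mult[OF es, of K]] by simp
  finally show "\<bar>suminf u\<bar> \<le> K * exp t" .
  have split: "suminf u = (\<Sum>k. u (k + 2)) + u 0 + u 1"
    using suminf_split_initial_segment[OF su, of 2] by (simp add: numeral_2_eq_2)
  have sa2: "summable (\<lambda>k. \<bar>u (k + 2)\<bar>)" using sa by (subst summable_iff_shift) 
  have sKe2: "summable (\<lambda>k. K * t\<^sup>2 * (t ^ k / fact k))" using se by (rule summable_mult)
  have b2: "\<bar>u (k + 2)\<bar> \<le> K * t\<^sup>2 * (t ^ k / fact k)" for k
  proof -
    have "fact k \<le> (fact (k + 2) :: real)" by (rule fact_mono) simp
    then have "t ^ (k + 2) / fact (k + 2) \<le> t ^ (k + 2) / fact k"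
      using t0 by (intro divide_left_mono) (auto simp: fact_gt_zero)
    also have "\<dots> = t\<^sup>2 * (t ^ k / fact k)" by (simp add: power_add power2_eq_square)
    finally have "t ^ (k + 2) / fact (k + 2) \<le> t\<^sup>2 * (t ^ k / fact k)" .
    then have "K * (t ^ (k + 2) / fact (k + 2)) \<le> K * (t\<^sup>2 * (t ^ k / fact k))"
      using K0 by (rule mult_left_mono)
    then show ?thesis using ub[of "k+2"] by (simp add: mult.assoc)
  qed
  have "\<bar>\<Sum>k. u (k + 2)\<bar> \<le> (\<Sum>k. \<bar>u (k + 2)\<bar>)" using sa2 by (rule summable_rabs)
  also have "\<dots> \<le> (\<Sum>k. K * t\<^sup>2 * (t ^ k / fact k))" by (rule suminf_le[OF b2 sa2 sKe2])
  also have "\<dots> = K * t\<^sup>2 * exp t" using sums_unique[OF sums_mult[OF es, of "K * t\<^sup>2"]] by simp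
  finally show "\<bar>suminf u - u 0 - u 1\<bar> \<le> K * t\<^sup>2 * exp t" using split by simp
qed

lemma exp_bounds:
  fixes t :: real
  assumes "0 \<le> t" "t \<le> 1"
  shows "exp t \<le> 3" "\<bar>exp t - 1 - t\<bar> \<le> 3 * t\<^sup>2" "\<bar>exp t - 1\<bar> \<le> 4 * t" "1 \<le> exp t"
proof -
  show e3: "exp t \<le> 3" using exp_le assms by (smt (verit) exp_le_cancel_iff)
  have u: "\<And>k. \<bar>t ^ k / fact k\<bar> \<le> 1 * (t ^ k / fact k)" using assms by simp
  have es: "(\<lambda>k. t ^ k / fact k) sums exp t"
    using exp_converges[of t] by (simp add: divide_inverse mult.commute)
  have "\<bar>exp t - 1 - t\<bar> \<le> 1 * t\<^sup>2 * exp t"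
    using series_split(3)[OF u assms(1)] es by (simp add: sums_iff)
  also have "\<dots> \<le> t\<^sup>2 * 3" using e3 by (simp add: mult_left_mono)
  finally show "\<bar>exp t - 1 - t\<bar> \<le> 3 * t\<^sup>2" by simp
  moreover have "t\<^sup>2 \<le> t" using assms by (simp add: power2_eq_square mult_left_le_one_le)
  ultimately show "\<bar>exp t - 1\<bar> \<le> 4 * t" using assms by linarith
  show "1 \<le> exp t" using assms by simp
qed

lemma fun_conv_bound:
  assumes mu: "finite_measure \<mu>" and s: "sets \<mu> = sets borel"
    and f[measurable]: "f \<in> borel_measurable borel" and fb: "\<And>x. \<bar>f x\<bar> \<le> M"
  shows "\<bar>fun_conv f \<mu> x\<bar> \<le> M * measure \<mu> UNIV"
proof -
  have "(\<lambda>y. f (x - y)) \<in> borel_measurable \<mu>" using s by (simp cong: measurable_cong_sets)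
  from abs_integral_le_const[OF mu this fb] show ?thesis
    by (simp add: fun_conv_def space_borel_sets[OF s])
qed

lemma fun_conv_meas:
  assumes mu: "finite_measure \<mu>" and s[measurable_cong]: "sets \<mu> = sets borel"
    and f[measurable]: "f \<in> borel_measurable borel"
  shows "fun_conv f \<mu> \<in> borel_measurable borel"
proof -
  interpret finite_measure \<mu> by fact
  have "(\<lambda>x. \<integral>y. f (x - y) \<partial>\<mu>) \<in> borel_measurable borel"
    by (rule borel_measurable_lebesgue_integral) simp
  then show ?thesis unfolding fun_conv_def[abs_def] .
qed

lemma conv_inv_approx:
  fixes f :: "real \<Rightarrow> real" and \<nu> :: "real measure"
  assumes f[measurable]: "f \<in> borel_measurable borel" and fb: "\<And>x. \<bar>f x\<bar> \<le> M"
    and fin: "finite_measure \<nu>" and s[measurable_cong]: "sets \<nu> = sets borel"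
    and mass: "measure \<nu> UNIV = lam" and lam: "0 < lam" and D: "0 < \<Delta>"
  shows "conv_inv f \<gamma> lam \<Delta> \<nu> \<in> borel_measurable borel"
    and "\<bar>conv_inv f \<gamma> lam \<Delta> \<nu> x\<bar> \<le> exp (lam * \<Delta>) * M * exp (lam * \<Delta>)"
    and "\<bar>conv_inv f \<gamma> lam \<Delta> \<nu> x - exp (lam * \<Delta>) * (f (x - \<gamma> * \<Delta>) - \<Delta> * fun_conv f (nu_bar \<nu>) (x - \<gamma> * \<Delta>))\<bar>
          \<le> exp (lam * \<Delta>) * M * (lam * \<Delta>)\<^sup>2 * exp (lam * \<Delta>)"
proof -
  define c where "c = \<gamma> * \<Delta>"
  define t where "t = lam * \<Delta>"
  define Qb where "Qb k = (return borel c \<star> conv_pow (nu_bar \<nu>) k)" for k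
  have nb: "finite_measure (nu_bar \<nu>)" "sets (nu_bar \<nu>) = sets borel" "measure (nu_bar \<nu>) UNIV = lam"
    using nu_bar_props[OF fin s] mass by auto
  have cp: "finite_measure (conv_pow (nu_bar \<nu>) k)" "sets (conv_pow (nu_bar \<nu>) k) = sets borel"
     "measure (conv_pow (nu_bar \<nu>) k) UNIV = lam ^ k" for k
    using conv_pow_props[OF nb(1,2), of k] nb(3) by auto
  have Qb: "finite_measure (Qb k)" "sets (Qb k) = sets borel" "measure (Qb k) UNIV = lam ^ k" for k
    using conv_return_props[OF cp(1,2), of c k] cp(3) unfolding Qb_def by auto
  have ci: "conv_inv f \<gamma> lam \<Delta> \<nu> x = (\<Sum>k. exp t * (- \<Delta>) ^ k / fact k * fun_conv f (Qb k) x)" for x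
    by (simp add: conv_inv_def Qb_def c_def t_def)
  have M0: "0 \<le> M" using fb[of 0] by linarith
  have ub: "\<bar>exp t * (- \<Delta>) ^ k / fact k * fun_conv f (Qb k) x\<bar> \<le> (exp t * M) * (t ^ k / fact k)" for k x
  proof -
    have "\<bar>fun_conv f (Qb k) x\<bar> \<le> M * lam ^ k" using fun_conv_bound[OF Qb(1,2) f fb, of k x] Qb(3) by simp
    then have "exp t * \<Delta> ^ k / fact k * \<bar>fun_conv f (Qb k) x\<bar> \<le> exp t * \<Delta> ^ k / fact k * (M * lam ^ k)"
      using D by (intro mult_left_mono) auto
    then show ?thesis using D by (simp add: abs_mult power_abs t_def power_mult_distrib field_simps)
  qed
  have t0: "0 \<le> t" using lam D by (simp add: t_def)
  have mt: "(\<lambda>x. exp t * (- \<Delta>) ^ k / fact k * fun_conv f (Qb k) x) \<in> borel_measurable borel" for k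
    using fun_conv_meas[OF Qb(1,2) f, of k] by measurable
  show "conv_inv f \<gamma> lam \<Delta> \<nu> \<in> borel_measurable borel"
    unfolding ci[abs_def] by (rule borel_measurable_suminf) (rule mt)
  show "\<bar>conv_inv f \<gamma> lam \<Delta> \<nu> x\<bar> \<le> exp (lam * \<Delta>) * M * exp (lam * \<Delta>)"
    using series_split(2)[OF ub[of _ x] t0] by (simp add: ci t_def)
  have fR: "finite_measure (return borel (0::real))" by (rule fin_return)
  have b0: "fun_conv f (Qb 0) x = f (x - c)"
  proof -
    have "fun_conv f (Qb 0) x = (\<integral>y. f (x - (c + y)) \<partial>return borel 0)"
      unfolding fun_conv_def Qb_def conv_pow.simps
      by (rule integral_conv_return[OF fR _ _ fb]) auto
    then show ?thesis by (simp add: integral_return)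
  qed
  have b1: "fun_conv f (Qb 1) x = fun_conv f (nu_bar \<nu>) (x - c)"
  proof -
    have "fun_conv f (Qb 1) x = (\<integral>y. f (x - (c + y)) \<partial>conv_pow (nu_bar \<nu>) 1)"
      unfolding fun_conv_def Qb_def
      by (rule integral_conv_return[OF cp(1,2), where B=M]) (auto simp: fb)
    also have "\<dots> = (\<integral>y. f (x - (c + y)) \<partial>(nu_bar \<nu> \<star> return borel 0))" by simp
    also have "\<dots> = (\<integral>y. (\<integral>z. f (x - (c + (y + z))) \<partial>return borel 0) \<partial>nu_bar \<nu>)"
      by (rule integral_convolution[OF nb(1) fR nb(2) _ _ fb]) auto
    also have "\<dots> = (\<integral>y. f (x - c - y) \<partial>nu_bar \<nu>)"
      by (rule Bochner_Integration.integral_cong) (auto simp: integral_return algebra_simps)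
    finally show ?thesis by (simp add: fun_conv_def)
  qed
  show "\<bar>conv_inv f \<gamma> lam \<Delta> \<nu> x - exp (lam * \<Delta>) * (f (x - \<gamma> * \<Delta>) - \<Delta> * fun_conv f (nu_bar \<nu>) (x - \<gamma> * \<Delta>))\<bar>
          \<le> exp (lam * \<Delta>) * M * (lam * \<Delta>)\<^sup>2 * exp (lam * \<Delta>)"
    using series_split(3)[OF ub[of _ x] t0] by (simp add: ci b0 b1[unfolded One_nat_def] t_def c_def algebra_simps)
qed

lemma P_approx:
  fixes h :: "real \<Rightarrow> real" and \<nu> :: "real measure"
  assumes fin: "finite_measure \<nu>" and s[measurable_cong]: "sets \<nu> = sets borel"
    and mass: "measure \<nu> UNIV = lam" and lam: "0 < lam" and D: "0 < \<Delta>"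
    and h[measurable]: "h \<in> borel_measurable borel" and hb: "\<And>x. \<bar>h x\<bar> \<le> H"
  shows "finite_measure (P_meas \<gamma> lam \<Delta> \<nu>)" "sets (P_meas \<gamma> lam \<Delta> \<nu>) = sets borel"
    "measure (P_meas \<gamma> lam \<Delta> \<nu>) UNIV = 1"
    "\<bar>(\<integral>x. h x \<partial>P_meas \<gamma> lam \<Delta> \<nu>) - (exp (- (lam * \<Delta>)) * h (\<gamma> * \<Delta>)
        + exp (- (lam * \<Delta>)) * \<Delta> * (\<integral>y. h (\<gamma> * \<Delta> + y) \<partial>\<nu>))\<bar> \<le> H * (lam * \<Delta>)\<^sup>2"
proof -
  define c where "c = \<gamma> * \<Delta>"
  define t where "t = lam * \<Delta>"
  define Q where "Q k = (return borel c \<star> conv_pow \<nu> k)" for k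
  define w where "w k = exp (- lam * \<Delta>) * \<Delta> ^ k / fact k" for k
  have cp: "finite_measure (conv_pow \<nu> k)" "sets (conv_pow \<nu> k) = sets borel"
     "measure (conv_pow \<nu> k) UNIV = lam ^ k" for k
    using conv_pow_props[OF fin s, of k] mass by auto
  have Q: "finite_measure (Q k)" "sets (Q k) = sets borel" "measure (Q k) UNIV = lam ^ k" for k
    using conv_return_props[OF cp(1,2), of c k] cp(3) unfolding Q_def by auto
  have PM: "P_meas \<gamma> lam \<Delta> \<nu> = sumM w Q"
    by (simp add: P_meas_def sumM_def w_def Q_def c_def)
  have w0: "0 \<le> w k" for k using D by (simp add: w_def)
  have wl: "w k * lam ^ k = exp (- t) * (t ^ k / fact k)" for k
    by (simp add: w_def t_def power_mult_distrib)
  have es: "(\<lambda>k. t ^ k / fact k) sums exp t"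
    using exp_converges[of t] by (simp add: divide_inverse mult.commute)
  have es2: "(\<lambda>k. w k * measure (Q k) UNIV) sums 1"
    using sums_mult[OF es, of "exp (- t)"] by (simp add: Q(3) wl exp_minus field_simps)
  have sm: "summable (\<lambda>k. w k * measure (Q k) UNIV)" using es2 by (rule sums_summable)
  note I = integral_sumM[OF Q(1,2) w0 sm h hb]
  show "finite_measure (P_meas \<gamma> lam \<Delta> \<nu>)" using I(1) PM by simp
  show "sets (P_meas \<gamma> lam \<Delta> \<nu>) = sets borel" using PM by simp
  show "measure (P_meas \<gamma> lam \<Delta> \<nu>) UNIV = 1" using I(2) PM es2 by (simp add: sums_iff)
  have t0: "0 \<le> t" using lam D by (simp add: t_def)
  have ub: "\<bar>w k * (\<integral>x. h x \<partial>Q k)\<bar> \<le> (exp (- t) * H) * (t ^ k / fact k)" for k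
  proof -
    have "\<bar>\<integral>x. h x \<partial>Q k\<bar> \<le> H * lam ^ k"
      using abs_integral_le_const[OF Q(1)[of k] _ hb] Q(2,3) space_borel_sets[OF Q(2)[of k]]
      by (simp cong: measurable_cong_sets)
    then have "w k * \<bar>\<integral>x. h x \<partial>Q k\<bar> \<le> w k * (H * lam ^ k)" using w0 by (rule mult_left_mono)
    also have "\<dots> = (exp (- t) * H) * (t ^ k / fact k)" using wl[of k] by (simp add: algebra_simps)
    finally show ?thesis using w0[of k] by (simp add: abs_mult)
  qed
  have fR: "finite_measure (return borel (0::real))" by (rule fin_return)
  have q0: "(\<integral>x. h x \<partial>Q 0) = h c"
  proof -
    have "(\<integral>x. h x \<partial>Q 0) = (\<integral>y. h (c + y) \<partial>return borel 0)"
      unfolding Q_def conv_pow.simps by (rule integral_conv_return[OF fR _ h hb]) auto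
    then show ?thesis by (simp add: integral_return)
  qed
  have q1: "(\<integral>x. h x \<partial>Q 1) = (\<integral>y. h (c + y) \<partial>\<nu>)"
  proof -
    have "(\<integral>x. h x \<partial>Q 1) = (\<integral>y. h (c + y) \<partial>conv_pow \<nu> 1)"
      unfolding Q_def by (rule integral_conv_return[OF cp(1,2) h hb])
    also have "\<dots> = (\<integral>y. h (c + y) \<partial>(\<nu> \<star> return borel 0))" by simp
    also have "\<dots> = (\<integral>y. (\<integral>z. h (c + (y + z)) \<partial>return borel 0) \<partial>\<nu>)"
      by (rule integral_convolution[OF fin fR s _ _ hb]) auto
    also have "\<dots> = (\<integral>y. h (c + y) \<partial>\<nu>)"
      by (rule Bochner_Integration.integral_cong) (auto simp: integral_return)
    finally show ?thesis .
  qed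
  have eq: "(\<integral>x. h x \<partial>P_meas \<gamma> lam \<Delta> \<nu>) = (\<Sum>k. w k * (\<integral>x. h x \<partial>Q k))"
    using I(4) PM by simp
  have w01: "w 0 = exp (- (lam * \<Delta>))" "w 1 = exp (- (lam * \<Delta>)) * \<Delta>" by (simp_all add: w_def)
  have bnd: "\<bar>(\<Sum>k. w k * (\<integral>x. h x \<partial>Q k)) - w 0 * (\<integral>x. h x \<partial>Q 0) - w 1 * (\<integral>x. h x \<partial>Q 1)\<bar>
      \<le> exp (- t) * H * t\<^sup>2 * exp t"
    by (rule series_split(3)[OF ub t0])
  also have "\<dots> = H * t\<^sup>2" by (simp add: exp_minus field_simps)
  finally have bnd2: "\<bar>(\<Sum>k. w k * (\<integral>x. h x \<partial>Q k)) - w 0 * (\<integral>x. h x \<partial>Q 0) - w 1 * (\<integral>x. h x \<partial>Q 1)\<bar> \<le> H * t\<^sup>2" .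
  show "\<bar>(\<integral>x. h x \<partial>P_meas \<gamma> lam \<Delta> \<nu>) - (exp (- (lam * \<Delta>)) * h (\<gamma> * \<Delta>)
        + exp (- (lam * \<Delta>)) * \<Delta> * (\<integral>y. h (\<gamma> * \<Delta> + y) \<partial>\<nu>))\<bar> \<le> H * (lam * \<Delta>)\<^sup>2"
    unfolding eq using bnd2 unfolding q0 q1 w01 t_def c_def by (simp add: algebra_simps)
qed

lemma integral_scale_inv:
  fixes \<nu> :: "real measure" and g :: "real \<Rightarrow> real"
  assumes lam: "0 < lam" and g: "g \<in> borel_measurable \<nu>"
  shows "(\<integral>x. g x \<partial>scale_measure (1 / ennreal lam) \<nu>) = (1 / lam) * (\<integral>x. g x \<partial>\<nu>)"
proof -
  have r: "1 / ennreal lam = ennreal (1 / lam)"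
    using lam divide_ennreal[of 1 lam] by simp
  have eqm: "scale_measure (ennreal (1 / lam)) \<nu> = density \<nu> (\<lambda>_. ennreal (1 / lam))"
  proof (rule measure_eqI)
    show "sets (scale_measure (ennreal (1 / lam)) \<nu>) = sets (density \<nu> (\<lambda>_. ennreal (1 / lam)))" by simp
    fix A assume "A \<in> sets (scale_measure (ennreal (1 / lam)) \<nu>)"
    then have A: "A \<in> sets \<nu>" by simp
    show "emeasure (scale_measure (ennreal (1 / lam)) \<nu>) A = emeasure (density \<nu> (\<lambda>_. ennreal (1 / lam))) A"
      using A by (simp add: emeasure_density nn_integral_cmult_indicator)
  qed
  show ?thesis
    unfolding r eqm using lam g by (subst integral_density) auto
qed

lemma abs_mult_le: "\<bar>a\<bar> \<le> A \<Longrightarrow> \<bar>b\<bar> \<le> B \<Longrightarrow> \<bar>a * b\<bar> \<le> A * (B::real)"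
  by (simp add: abs_mult mult_mono')

lemma main_bound:
  fixes f1 f2 :: "real \<Rightarrow> real" and \<nu> :: "real measure"
  assumes f1[measurable]: "f1 \<in> borel_measurable borel" and f2[measurable]: "f2 \<in> borel_measurable borel"
    and b1: "\<And>x. \<bar>f1 x\<bar> \<le> M1" and b2: "\<And>x. \<bar>f2 x\<bar> \<le> M2"
    and fin: "finite_measure \<nu>" and s[measurable_cong]: "sets \<nu> = sets borel"
    and mass: "measure \<nu> UNIV = lam" and lam: "0 < lam" and D: "0 < \<Delta>" and t1: "lam * \<Delta> \<le> 1"
  shows "\<bar>(\<integral>x. conv_inv f1 \<gamma> lam \<Delta> \<nu> x * conv_inv f2 \<gamma> lam \<Delta> \<nu> x \<partial>P_meas \<gamma> lam \<Delta> \<nu>)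
              - (f1 0 * f2 0 + \<Delta> * ((\<integral>x. f1 x * f2 x \<partial>\<nu>)
                   - f1 0 * fun_conv f2 (nu_bar \<nu>) 0 - f2 0 * fun_conv f1 (nu_bar \<nu>) 0
                   + lam * f1 0 * f2 0))\<bar> \<le> (200 * M1 * M2) * (lam * \<Delta>)\<^sup>2"
proof -
  define t where "t = lam * \<Delta>"
  define E where "E = exp t"
  define c where "c = \<gamma> * \<Delta>"
  define K where "K = M1 * M2 * t\<^sup>2"
  define G1 where "G1 = conv_inv f1 \<gamma> lam \<Delta> \<nu>"
  define G2 where "G2 = conv_inv f2 \<gamma> lam \<Delta> \<nu>"
  define P where "P = P_meas \<gamma> lam \<Delta> \<nu>"
  define B1 where "B1 x = fun_conv f1 (nu_bar \<nu>) (x - c)" for x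
  define B2 where "B2 x = fun_conv f2 (nu_bar \<nu>) (x - c)" for x
  have t0: "0 \<le> t" using lam D by (simp add: t_def)
  have tt: "t \<le> 1" using t1 by (simp add: t_def)
  have M10: "0 \<le> M1" using b1[of 0] by linarith
  have M20: "0 \<le> M2" using b2[of 0] by linarith
  have E3: "E \<le> 3" and E1: "1 \<le> E" and Eerr: "\<bar>E - 1 - t\<bar> \<le> 3 * t\<^sup>2" and Eerr1: "\<bar>E - 1\<bar> \<le> 4 * t"
    using exp_bounds[OF t0 tt] by (simp_all add: E_def)
  have K0: "0 \<le> K" using M10 M20 by (simp add: K_def)
  note ca1 = conv_inv_approx[OF f1 b1 fin s mass lam D, of \<gamma>]
  note ca2 = conv_inv_approx[OF f2 b2 fin s mass lam D, of \<gamma>]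
  have G1m[measurable]: "G1 \<in> borel_measurable borel" using ca1(1) by (simp add: G1_def)
  have G2m[measurable]: "G2 \<in> borel_measurable borel" using ca2(1) by (simp add: G2_def)
  have G1b: "\<bar>G1 x\<bar> \<le> 9 * M1" for x
  proof -
    have "\<bar>G1 x\<bar> \<le> E * M1 * E" using ca1(2)[of x] by (simp add: G1_def E_def t_def)
    also have "\<dots> \<le> 3 * M1 * 3" using E3 E1 M10 by (intro mult_mono) auto
    finally show ?thesis by simp
  qed
  have G2b: "\<bar>G2 x\<bar> \<le> 9 * M2" for x
  proof -
    have "\<bar>G2 x\<bar> \<le> E * M2 * E" using ca2(2)[of x] by (simp add: G2_def E_def t_def)
    also have "\<dots> \<le> 3 * M2 * 3" using E3 E1 M20 by (intro mult_mono) auto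
    finally show ?thesis by simp
  qed
  have E2le: "E * E \<le> 9"
  proof -
    have "E * E \<le> 3 * 3" using E3 E1 by (intro mult_mono) auto
    then show ?thesis by simp
  qed
  have r1: "\<bar>G1 x - E * (f1 (x - c) - \<Delta> * B1 x)\<bar> \<le> 9 * (M1 * t\<^sup>2)" for x
  proof -
    have "\<bar>G1 x - E * (f1 (x - c) - \<Delta> * B1 x)\<bar> \<le> (E * E) * (M1 * t\<^sup>2)"
      using ca1(3)[of x] by (simp add: G1_def E_def t_def c_def B1_def algebra_simps)
    also have "\<dots> \<le> 9 * (M1 * t\<^sup>2)" using E2le M10 by (intro mult_right_mono) auto
    finally show ?thesis .
  qed
  have r2: "\<bar>G2 x - E * (f2 (x - c) - \<Delta> * B2 x)\<bar> \<le> 9 * (M2 * t\<^sup>2)" for x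
  proof -
    have "\<bar>G2 x - E * (f2 (x - c) - \<Delta> * B2 x)\<bar> \<le> (E * E) * (M2 * t\<^sup>2)"
      using ca2(3)[of x] by (simp add: G2_def E_def t_def c_def B2_def algebra_simps)
    also have "\<dots> \<le> 9 * (M2 * t\<^sup>2)" using E2le M20 by (intro mult_right_mono) auto
    finally show ?thesis .
  qed
  note nb = nu_bar_props[OF fin s]
  have B1b: "\<bar>B1 x\<bar> \<le> M1 * lam" for x
    using fun_conv_bound[OF nb(1,2) f1 b1] nb(3) mass by (simp add: B1_def)
  have B2b: "\<bar>B2 x\<bar> \<le> M2 * lam" for x
    using fun_conv_bound[OF nb(1,2) f2 b2] nb(3) mass by (simp add: B2_def)
  have B1m[measurable]: "B1 \<in> borel_measurable borel"
    unfolding B1_def[abs_def] by (rule measurable_compose[OF _ fun_conv_meas[OF nb(1,2) f1]]) simp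
  have B2m[measurable]: "B2 \<in> borel_measurable borel"
    unfolding B2_def[abs_def] by (rule measurable_compose[OF _ fun_conv_meas[OF nb(1,2) f2]]) simp
  define A1 where "A1 x = f1 (x - c)" for x
  define A2 where "A2 x = f2 (x - c)" for x
  have A1b: "\<bar>A1 x\<bar> \<le> M1" for x using b1 by (simp add: A1_def)
  have A2b: "\<bar>A2 x\<bar> \<le> M2" for x using b2 by (simp add: A2_def)
  have A1m[measurable]: "A1 \<in> borel_measurable borel" unfolding A1_def[abs_def] by measurable
  have A2m[measurable]: "A2 \<in> borel_measurable borel" unfolding A2_def[abs_def] by measurable
  have DB1: "\<bar>\<Delta> * B1 x\<bar> \<le> M1 * t" for x
  proof -
    have "\<bar>\<Delta> * B1 x\<bar> \<le> \<Delta> * (M1 * lam)" using abs_mult_le[of \<Delta> \<Delta> "B1 x" "M1 * lam"] B1b D by simp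
    then show ?thesis by (simp add: t_def algebra_simps)
  qed
  have DB2: "\<bar>\<Delta> * B2 x\<bar> \<le> M2 * t" for x
  proof -
    have "\<bar>\<Delta> * B2 x\<bar> \<le> \<Delta> * (M2 * lam)" using abs_mult_le[of \<Delta> \<Delta> "B2 x" "M2 * lam"] B2b D by simp
    then show ?thesis by (simp add: t_def algebra_simps)
  qed
  define h where "h x = A1 x * A2 x - \<Delta> * (A1 x * B2 x + B1 x * A2 x)" for x
  have hm[measurable]: "h \<in> borel_measurable borel" unfolding h_def[abs_def] by measurable
  have hb: "\<bar>h x\<bar> \<le> 3 * M1 * M2" for x
  proof -
    have a: "\<bar>A1 x * A2 x\<bar> \<le> M1 * M2" by (rule abs_mult_le[OF A1b A2b])
    have b: "\<bar>A1 x * (\<Delta> * B2 x)\<bar> \<le> M1 * (M2 * t)" by (rule abs_mult_le[OF A1b DB2])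
    have c: "\<bar>(\<Delta> * B1 x) * A2 x\<bar> \<le> (M1 * t) * M2" by (rule abs_mult_le[OF DB1 A2b])
    have "M1 * (M2 * t) \<le> M1 * M2" using mult_left_mono[OF mult_left_le[OF tt M20] M10] .
    moreover have "h x = A1 x * A2 x - A1 x * (\<Delta> * B2 x) - (\<Delta> * B1 x) * A2 x" by (simp add: h_def algebra_simps)
    moreover have "(M1 * t) * M2 = M1 * (M2 * t)" "3 * M1 * M2 = 3 * (M1 * M2)" by simp_all
    ultimately show ?thesis using a b c unfolding abs_le_iff by linarith
  qed
  define Dd where "Dd x = G1 x * G2 x - E * E * h x" for x
  have Ddm[measurable]: "Dd \<in> borel_measurable borel" unfolding Dd_def[abs_def] by measurable
  have Ddb: "\<bar>Dd x\<bar> \<le> 144 * K" for x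
  proof -
    define p1 where "p1 = E * (A1 x - \<Delta> * B1 x)"
    define p2 where "p2 = E * (A2 x - \<Delta> * B2 x)"
    have id: "Dd x = (E * E) * ((\<Delta> * B1 x) * (\<Delta> * B2 x)) + p1 * (G2 x - p2) + (G1 x - p1) * G2 x"
      by (simp add: Dd_def h_def p1_def p2_def algebra_simps)
    have R1: "\<bar>G1 x - p1\<bar> \<le> 9 * (M1 * t\<^sup>2)" using r1[of x] by (simp add: p1_def A1_def)
    have R2: "\<bar>G2 x - p2\<bar> \<le> 9 * (M2 * t\<^sup>2)" using r2[of x] by (simp add: p2_def A2_def)
    have p1b: "\<bar>p1\<bar> \<le> 3 * (2 * M1)"
    proof -
      have "\<bar>A1 x - \<Delta> * B1 x\<bar> \<le> 2 * M1"
        using A1b[of x] DB1[of x] M10 mult_left_le[OF tt M10] unfolding abs_le_iff by linarith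
      then show ?thesis unfolding p1_def using E1 E3 by (intro abs_mult_le) auto
    qed
    have e1: "\<bar>(E * E) * ((\<Delta> * B1 x) * (\<Delta> * B2 x))\<bar> \<le> 9 * ((M1 * t) * (M2 * t))"
      using E2le E1 by (intro abs_mult_le abs_mult_le[OF DB1 DB2]) (auto simp: abs_mult)
    have e2: "\<bar>p1 * (G2 x - p2)\<bar> \<le> (3 * (2 * M1)) * (9 * (M2 * t\<^sup>2))" by (rule abs_mult_le[OF p1b R2])
    have e3: "\<bar>(G1 x - p1) * G2 x\<bar> \<le> (9 * (M1 * t\<^sup>2)) * (9 * M2)" by (rule abs_mult_le[OF R1 G2b])
    have "9 * ((M1 * t) * (M2 * t)) = 9 * K" "(3 * (2 * M1)) * (9 * (M2 * t\<^sup>2)) = 54 * K"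
      "(9 * (M1 * t\<^sup>2)) * (9 * M2) = 81 * K" by (simp_all add: K_def power2_eq_square)
    then show ?thesis using e1 e2 e3 unfolding id abs_le_iff by linarith
  qed
  note PA = P_approx[OF fin s mass lam D hm hb, of \<gamma>]
  interpret P: finite_measure P using PA(1) by (simp add: P_def)
  have Psets[measurable_cong]: "sets P = sets borel" using PA(2) by (simp add: P_def)
  have Pm: "measure P (space P) = 1" using PA(3) space_borel_sets[OF Psets] by (simp add: P_def)
  have intD: "integrable P Dd" by (rule P.integrable_const_bound[of _ "144 * K"]) (use Ddb in auto)
  have inth: "integrable P h" by (rule P.integrable_const_bound[of _ "3 * M1 * M2"]) (use hb in auto)
  define ID where "ID = (\<integral>x. Dd x \<partial>P)"
  define Ih where "Ih = (\<integral>x. h x \<partial>P)"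
  have LHS: "(\<integral>x. G1 x * G2 x \<partial>P) = E * E * Ih + ID"
  proof -
    have "(\<integral>x. G1 x * G2 x \<partial>P) = (\<integral>x. E * E * h x + Dd x \<partial>P)" by (simp add: Dd_def)
    also have "\<dots> = E * E * Ih + ID" using intD inth by (simp add: Ih_def ID_def)
    finally show ?thesis .
  qed
  have IDb: "\<bar>ID\<bar> \<le> 144 * K"
    using abs_integral_le_const[OF P.finite_measure_axioms _ Ddb] Pm by (simp add: ID_def cong: measurable_cong_sets)
  define bb1 where "bb1 = fun_conv f1 (nu_bar \<nu>) 0"
  define bb2 where "bb2 = fun_conv f2 (nu_bar \<nu>) 0"
  define F0 where "F0 = f1 0 * f2 0"
  define I where "I = (\<integral>x. f1 x * f2 x \<partial>\<nu>)"
  define kk where "kk y = A1 (c + y) * B2 (c + y) + B1 (c + y) * A2 (c + y)" for y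
  define Ik where "Ik = (\<integral>y. kk y \<partial>\<nu>)"
  have hc: "h c = F0 - \<Delta> * (f1 0 * bb2 + bb1 * f2 0)"
    by (simp add: h_def A1_def A2_def B1_def B2_def bb1_def bb2_def F0_def)
  have kkb: "\<bar>kk y\<bar> \<le> 2 * M1 * M2 * lam" for y
  proof -
    have "\<bar>A1 (c + y) * B2 (c + y)\<bar> \<le> M1 * (M2 * lam)" by (rule abs_mult_le[OF A1b B2b])
    moreover have "\<bar>B1 (c + y) * A2 (c + y)\<bar> \<le> (M1 * lam) * M2" by (rule abs_mult_le[OF B1b A2b])
    moreover have "(M1 * lam) * M2 = M1 * (M2 * lam)" "2 * M1 * M2 * lam = 2 * (M1 * (M2 * lam))" by simp_all
    ultimately show ?thesis unfolding kk_def abs_le_iff by linarith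
  qed
  interpret N: finite_measure \<nu> by fact
  have kkm[measurable]: "kk \<in> borel_measurable borel" unfolding kk_def[abs_def] by measurable
  have intk: "integrable \<nu> kk" by (rule N.integrable_const_bound[of _ "2 * M1 * M2 * lam"]) (use kkb in auto)
  have intf: "integrable \<nu> (\<lambda>x. f1 x * f2 x)"
    by (rule N.integrable_const_bound[of _ "M1 * M2"]) (auto intro: abs_mult_le[OF b1 b2])
  have Ihc: "(\<integral>y. h (c + y) \<partial>\<nu>) = I - \<Delta> * Ik"
  proof -
    have "(\<integral>y. h (c + y) \<partial>\<nu>) = (\<integral>y. f1 y * f2 y - \<Delta> * kk y \<partial>\<nu>)"
      by (simp add: h_def kk_def A1_def A2_def)
    also have "\<dots> = I - \<Delta> * Ik" using intk intf by (simp add: I_def Ik_def)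
    finally show ?thesis .
  qed
  have Ikb: "\<bar>Ik\<bar> \<le> 2 * M1 * M2 * lam * lam"
    using abs_integral_le_const[OF fin _ kkb] mass space_borel_sets[OF s] by (simp add: Ik_def cong: measurable_cong_sets)
  have err1: "\<bar>Ih - (exp (- t) * h c + exp (- t) * \<Delta> * (I - \<Delta> * Ik))\<bar> \<le> 3 * K"
  proof -
    have "\<bar>Ih - (exp (- t) * h c + exp (- t) * \<Delta> * (\<integral>y. h (c + y) \<partial>\<nu>))\<bar> \<le> 3 * M1 * M2 * t\<^sup>2"
      using PA(4) unfolding Ih_def P_def t_def c_def .
    then show ?thesis unfolding Ihc by (simp add: K_def mult.assoc)
  qed
  have err1': "\<bar>E * E * (Ih - (exp (- t) * h c + exp (- t) * \<Delta> * (I - \<Delta> * Ik)))\<bar> \<le> 9 * (3 * K)"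
    using E1 E2le by (intro abs_mult_le err1) auto
  have EEe: "E * E * exp (- t) = E" by (simp add: E_def exp_minus)
  have e3: "\<bar>E * (\<Delta> * \<Delta> * Ik)\<bar> \<le> 3 * (2 * K)"
  proof -
    have "\<bar>\<Delta> * \<Delta> * Ik\<bar> \<le> \<Delta> * \<Delta> * (2 * M1 * M2 * lam * lam)" using Ikb D by (simp add: abs_mult)
    also have "\<dots> = 2 * K" by (simp add: K_def t_def power2_eq_square)
    finally have x: "\<bar>\<Delta> * \<Delta> * Ik\<bar> \<le> 2 * K" .
    have "\<bar>E\<bar> \<le> 3" using E1 E3 by simp
    from abs_mult_le[OF this x] show ?thesis .
  qed
  define Y where "Y = \<Delta> * (I - f1 0 * bb2 - f2 0 * bb1)"
  have Yb: "\<bar>Y\<bar> \<le> 3 * M1 * M2 * t"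
  proof -
    have i: "\<bar>I\<bar> \<le> M1 * M2 * lam"
      using abs_integral_le_const[OF fin _ abs_mult_le[OF b1 b2]] mass space_borel_sets[OF s]
      by (simp add: I_def cong: measurable_cong_sets)
    have j1: "\<bar>f1 0 * bb2\<bar> \<le> M1 * (M2 * lam)"
      using abs_mult_le[OF b1 fun_conv_bound[OF nb(1,2) f2 b2]] nb(3) mass by (simp add: bb2_def)
    have j2: "\<bar>f2 0 * bb1\<bar> \<le> M2 * (M1 * lam)"
      using abs_mult_le[OF b2 fun_conv_bound[OF nb(1,2) f1 b1]] nb(3) mass by (simp add: bb1_def)
    have "\<bar>I - f1 0 * bb2 - f2 0 * bb1\<bar> \<le> 3 * M1 * M2 * lam"
      using i j1 j2 unfolding abs_le_iff
      by (simp add: algebra_simps)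
    then have "\<bar>\<Delta> * (I - f1 0 * bb2 - f2 0 * bb1)\<bar> \<le> \<Delta> * (3 * M1 * M2 * lam)"
      using D by (simp add: abs_mult)
    then show ?thesis by (simp add: Y_def t_def algebra_simps)
  qed
  have F0b: "\<bar>F0\<bar> \<le> M1 * M2" unfolding F0_def by (rule abs_mult_le[OF b1 b2])
  have e4: "\<bar>(E - 1 - t) * F0\<bar> \<le> (3 * t\<^sup>2) * (M1 * M2)" by (rule abs_mult_le[OF Eerr F0b])
  have e5: "\<bar>(E - 1) * Y\<bar> \<le> (4 * t) * (3 * M1 * M2 * t)" by (rule abs_mult_le[OF Eerr1 Yb])
  have k4: "(3 * t\<^sup>2) * (M1 * M2) = 3 * K" and k5: "(4 * t) * (3 * M1 * M2 * t) = 12 * K"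
    by (simp_all add: K_def power2_eq_square)
  define T where "T = f1 0 * f2 0 + \<Delta> * ((\<integral>x. f1 x * f2 x \<partial>\<nu>)
                   - f1 0 * fun_conv f2 (nu_bar \<nu>) 0 - f2 0 * fun_conv f1 (nu_bar \<nu>) 0
                   + lam * f1 0 * f2 0)"
  have X: "E * E * (exp (- t) * h c + exp (- t) * \<Delta> * (I - \<Delta> * Ik))
          = E * (h c + \<Delta> * (I - \<Delta> * Ik))"
  proof -
    have "E * E * (exp (- t) * h c + exp (- t) * \<Delta> * (I - \<Delta> * Ik))
        = (E * E * exp (- t)) * (h c + \<Delta> * (I - \<Delta> * Ik))" by (simp add: algebra_simps)
    also have "\<dots> = E * (h c + \<Delta> * (I - \<Delta> * Ik))" by (simp only: EEe)
    finally show ?thesis .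
  qed
  have err2: "\<bar>E * E * Ih - E * (h c + \<Delta> * (I - \<Delta> * Ik))\<bar> \<le> 9 * (3 * K)"
    using err1' unfolding X[symmetric] by (simp add: right_diff_distrib)
  have ident: "(\<integral>x. G1 x * G2 x \<partial>P) - T =
      ID + (E * E * Ih - E * (h c + \<Delta> * (I - \<Delta> * Ik)))
      - E * (\<Delta> * \<Delta> * Ik) + (E - 1 - t) * F0 + (E - 1) * Y"
    unfolding LHS T_def hc Y_def F0_def bb1_def bb2_def I_def
    by (simp add: t_def algebra_simps)
  have "\<bar>(\<integral>x. G1 x * G2 x \<partial>P) - T\<bar> \<le> 200 * K"
    using IDb err2 e3 e4 e5 K0 unfolding ident k4 k5 abs_le_iff by linarith
  then show ?thesis by (simp add: G1_def G2_def P_def T_def K_def t_def mult.assoc)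
qed

theorem lemma2p2:
  fixes f1 f2 :: "real \<Rightarrow> real"
  assumes f1_meas: "f1 \<in> borel_measurable borel" and f2_meas: "f2 \<in> borel_measurable borel"
    and f1_bdd: "bounded (range f1)" and f2_bdd: "bounded (range f2)"
  shows "(\<exists>C. \<forall>\<gamma> lam \<Delta> (\<nu>::real measure).
            finite_measure \<nu> \<and> sets \<nu> = sets borel \<and> measure \<nu> UNIV = lam
            \<and> lam > 0 \<and> \<Delta> > 0 \<and> lam * \<Delta> \<le> 1 \<longrightarrow>
            \<bar>(\<integral>x. conv_inv f1 \<gamma> lam \<Delta> \<nu> x * conv_inv f2 \<gamma> lam \<Delta> \<nu> x \<partial>P_meas \<gamma> lam \<Delta> \<nu>)
              - (f1 0 * f2 0 + \<Delta> * ((\<integral>x. f1 x * f2 x \<partial>\<nu>)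
                   - f1 0 * fun_conv f2 (nu_bar \<nu>) 0 - f2 0 * fun_conv f1 (nu_bar \<nu>) 0
                   + lam * f1 0 * f2 0))\<bar> \<le> C * (lam * \<Delta>)\<^sup>2)
    \<and> (f1 0 = 0 \<and> f2 0 = 0 \<longrightarrow>
         (\<exists>C. \<forall>\<gamma> lam \<Delta> (\<nu>::real measure).
            finite_measure \<nu> \<and> sets \<nu> = sets borel \<and> measure \<nu> UNIV = lam
            \<and> lam > 0 \<and> \<Delta> > 0 \<and> lam * \<Delta> \<le> 1 \<longrightarrow>
            \<bar>(\<integral>x. conv_inv f1 \<gamma> lam \<Delta> \<nu> x * conv_inv f2 \<gamma> lam \<Delta> \<nu> x \<partial>P_meas \<gamma> lam \<Delta> \<nu>)
              - lam * \<Delta> * (\<integral>x. f1 x * f2 x \<partial>(scale_measure (1 / lam) \<nu>))\<bar> \<le> C * (lam * \<Delta>)\<^sup>2))"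
proof -
  obtain M1 where b1: "\<And>x. \<bar>f1 x\<bar> \<le> M1" using f1_bdd unfolding bounded_iff by auto
  obtain M2 where b2: "\<And>x. \<bar>f2 x\<bar> \<le> M2" using f2_bdd unfolding bounded_iff by auto
  note mb = main_bound[OF f1_meas f2_meas b1 b2]
  show ?thesis
  proof (intro conjI impI)
    show "\<exists>C. \<forall>\<gamma> lam \<Delta> (\<nu>::real measure).
            finite_measure \<nu> \<and> sets \<nu> = sets borel \<and> measure \<nu> UNIV = lam
            \<and> lam > 0 \<and> \<Delta> > 0 \<and> lam * \<Delta> \<le> 1 \<longrightarrow>
            \<bar>(\<integral>x. conv_inv f1 \<gamma> lam \<Delta> \<nu> x * conv_inv f2 \<gamma> lam \<Delta> \<nu> x \<partial>P_meas \<gamma> lam \<Delta> \<nu>)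
              - (f1 0 * f2 0 + \<Delta> * ((\<integral>x. f1 x * f2 x \<partial>\<nu>)
                   - f1 0 * fun_conv f2 (nu_bar \<nu>) 0 - f2 0 * fun_conv f1 (nu_bar \<nu>) 0
                   + lam * f1 0 * f2 0))\<bar> \<le> C * (lam * \<Delta>)\<^sup>2"
      by (intro exI[of _ "200 * M1 * M2"] allI impI) (use mb in blast)
  next
    assume z: "f1 0 = 0 \<and> f2 0 = 0"
    show "\<exists>C. \<forall>\<gamma> lam \<Delta> (\<nu>::real measure).
            finite_measure \<nu> \<and> sets \<nu> = sets borel \<and> measure \<nu> UNIV = lam
            \<and> lam > 0 \<and> \<Delta> > 0 \<and> lam * \<Delta> \<le> 1 \<longrightarrow>
            \<bar>(\<integral>x. conv_inv f1 \<gamma> lam \<Delta> \<nu> x * conv_inv f2 \<gamma> lam \<Delta> \<nu> x \<partial>P_meas \<gamma> lam \<Delta> \<nu>)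
              - lam * \<Delta> * (\<integral>x. f1 x * f2 x \<partial>(scale_measure (1 / lam) \<nu>))\<bar> \<le> C * (lam * \<Delta>)\<^sup>2"
    proof (intro exI[of _ "200 * M1 * M2"] allI impI)
      fix \<gamma> lam \<Delta> and \<nu> :: "real measure"
      assume a: "finite_measure \<nu> \<and> sets \<nu> = sets borel \<and> measure \<nu> UNIV = lam
            \<and> lam > 0 \<and> \<Delta> > 0 \<and> lam * \<Delta> \<le> 1"
      have s: "sets \<nu> = sets borel" using a by simp
      have m: "(\<lambda>x. f1 x * f2 x) \<in> borel_measurable \<nu>"
        using f1_meas f2_meas s by (simp cong: measurable_cong_sets)
      have sc: "lam * \<Delta> * (\<integral>x. f1 x * f2 x \<partial>(scale_measure (1 / ennreal lam) \<nu>)) = \<Delta> * (\<integral>x. f1 x * f2 x \<partial>\<nu>)"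
        using integral_scale_inv[of lam "\<lambda>x. f1 x * f2 x" \<nu>] a m by simp
      show "\<bar>(\<integral>x. conv_inv f1 \<gamma> lam \<Delta> \<nu> x * conv_inv f2 \<gamma> lam \<Delta> \<nu> x \<partial>P_meas \<gamma> lam \<Delta> \<nu>)
              - lam * \<Delta> * (\<integral>x. f1 x * f2 x \<partial>(scale_measure (1 / lam) \<nu>))\<bar> \<le> 200 * M1 * M2 * (lam * \<Delta>)\<^sup>2"
      proof -
        have sc': "lam * \<Delta> * (\<integral>x. f1 x * f2 x \<partial>(scale_measure (ennreal (1 / lam)) \<nu>)) = \<Delta> * (\<integral>x. f1 x * f2 x \<partial>\<nu>)"
          using sc a divide_ennreal[of 1 lam] by simp
        show ?thesis unfolding sc' using mb[of \<nu> lam \<Delta> \<gamma>] a z by simp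
      qed
    qed
  qed
qed

end
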